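(* Let $\lambda_1\ge\lambda_2\ge\dots\ge\lambda_p\ge0$ satisfy $3\lambda_1^2\le\Lambda^2:=\sum_{j=1}^p\lambda_j^2$, and define $h_j(t)=(1+\lambda_j^2t^2)^{-1/4}$ for $j=1,\dots,p$. Then \[ \int_0^\infty\prod_{j=1}^p h_j(t)\,dt\le\frac{C}{\Lambda} \] for an absolute constant $C$. *)

theory Defs
  imports "HOL-Analysis.Analysis"
begin

end

theory Submission
  imports Defs
begin

lemma esym_bound:
  fixes a :: "'a \<Rightarrow> real" and x :: real
  assumes "finite A" "\<forall>i\<in>A. 0 \<le> a i" "0 \<le> x"
  shows "0 \<le> (\<Sum>i\<in>A. a i) \<and>
         0 \<le> ((\<Sum>i\<in>A. a i)^2 - (\<Sum>i\<in>A. a i^2))/2 \<and>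
         0 \<le> ((\<Sum>i\<in>A. a i)^3 - 3*(\<Sum>i\<in>A. a i)*(\<Sum>i\<in>A. a i^2) + 2*(\<Sum>i\<in>A. a i^3))/6 \<and>
         1 + (\<Sum>i\<in>A. a i)*x + ((\<Sum>i\<in>A. a i)^2 - (\<Sum>i\<in>A. a i^2))/2 * x^2
           + ((\<Sum>i\<in>A. a i)^3 - 3*(\<Sum>i\<in>A. a i)*(\<Sum>i\<in>A. a i^2) + 2*(\<Sum>i\<in>A. a i^3))/6 * x^3
         \<le> (\<Prod>i\<in>A. 1 + a i * x)"
  using assms
proof (induction A rule: finite_induct)
  case empty
  then show ?case by simp
next
  case (insert b A)
  define q1 where "q1 = (\<Sum>i\<in>A. a i)"
  define q2 where "q2 = (\<Sum>i\<in>A. a i^2)"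
  define q3 where "q3 = (\<Sum>i\<in>A. a i^3)"
  define e2 where "e2 = (q1^2 - q2)/2"
  define e3 where "e3 = (q1^3 - 3*q1*q2 + 2*q3)/6"
  have IH: "0 \<le> q1" "0 \<le> e2" "0 \<le> e3" "1 + q1*x + e2*x^2 + e3*x^3 \<le> (\<Prod>i\<in>A. 1 + a i * x)"
    using insert unfolding q1_def q2_def q3_def e2_def e3_def by auto
  have ab: "0 \<le> a b" using insert by auto
  have E2: "((b' + q1)^2 - (b'^2 + q2))/2 = e2 + b' * q1" for b'
    unfolding e2_def by (simp add: field_simps power2_eq_square)
  have E3: "((b'+q1)^3 - 3*(b'+q1)*(b'^2+q2) + 2*(b'^3+q3))/6 = e3 + b' * e2" for b'
    unfolding e3_def e2_def by (simp add: field_simps power2_eq_square power3_eq_cube)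
  have P: "(\<Prod>i\<in>insert b A. 1 + a i * x) = (1 + a b * x) * (\<Prod>i\<in>A. 1 + a i * x)"
    using insert by simp
  have "(1 + a b * x) * (1 + q1*x + e2*x^2 + e3*x^3) \<le> (1 + a b * x) * (\<Prod>i\<in>A. 1 + a i * x)"
    using IH(4) ab insert.prems by (intro mult_left_mono) auto
  moreover have "1 + (a b + q1)*x + (e2 + a b * q1)*x^2 + (e3 + a b * e2)*x^3
     \<le> (1 + a b * x) * (1 + q1*x + e2*x^2 + e3*x^3)"
  proof -
    have "0 \<le> a b * e3 * x^4" using ab IH(3) insert.prems by simp
    then show ?thesis by (simp add: algebra_simps power2_eq_square power3_eq_cube power4_eq_xxxx)
  qed
  ultimately have fin: "1 + (a b + q1)*x + (e2 + a b * q1)*x^2 + (e3 + a b * e2)*x^3 \<le> (\<Prod>i\<in>insert b A. 1 + a i * x)"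
    unfolding P by linarith
  have S: "(\<Sum>i\<in>insert b A. a i) = a b + q1" "(\<Sum>i\<in>insert b A. a i^2) = a b^2 + q2"
    "(\<Sum>i\<in>insert b A. a i^3) = a b^3 + q3"
    using insert unfolding q1_def q2_def q3_def by simp_all
  show ?case unfolding S E2 E3 using fin IH ab by simp
qed

lemma e3_lower:
  fixes a :: "'a \<Rightarrow> real"
  assumes "\<forall>i\<in>A. 0 \<le> a i" "\<forall>i\<in>A. a i \<le> m" "3 * m \<le> (\<Sum>i\<in>A. a i)" "0 < (\<Sum>i\<in>A. a i)"
  shows "(\<Sum>i\<in>A. a i)^3 / 27 \<le> ((\<Sum>i\<in>A. a i)^3 - 3*(\<Sum>i\<in>A. a i)*(\<Sum>i\<in>A. a i^2) + 2*(\<Sum>i\<in>A. a i^3))/6"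
proof -
  define q1 where "q1 = (\<Sum>i\<in>A. a i)"
  define q2 where "q2 = (\<Sum>i\<in>A. a i^2)"
  define q3 where "q3 = (\<Sum>i\<in>A. a i^3)"
  have q1p: "0 < q1" using assms q1_def by simp
  have "q2 \<le> (\<Sum>i\<in>A. m * a i)" unfolding q2_def
    using assms(1,2) by (intro sum_mono) (simp add: power2_eq_square mult_right_mono)
  hence q2m: "q2 \<le> m * q1" by (simp add: q1_def sum_distrib_left)
  hence q2le: "3 * q2 \<le> q1^2" using assms(3) q1p unfolding q1_def[symmetric]
  proof -
    have "3 * m * q1 \<le> q1 * q1" using assms(3) q1p unfolding q1_def[symmetric] by (intro mult_right_mono) auto
    thus ?thesis using q2m by (simp add: power2_eq_square)
  qed
  have q2n: "0 \<le> q2" unfolding q2_def by (simp add: sum_nonneg)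
  have "(\<Sum>i\<in>A. sqrt (a i) * (a i * sqrt (a i)))\<^sup>2 \<le> (\<Sum>i\<in>A. (sqrt (a i))\<^sup>2) * (\<Sum>i\<in>A. (a i * sqrt (a i))\<^sup>2)"
    by (rule Cauchy_Schwarz_ineq_sum)
  also have "(\<Sum>i\<in>A. sqrt (a i) * (a i * sqrt (a i))) = q2"
    unfolding q2_def using assms(1) by (intro sum.cong) (auto simp: power2_eq_square)
  also have "(\<Sum>i\<in>A. (sqrt (a i))\<^sup>2) = q1"
    unfolding q1_def using assms(1) by (intro sum.cong) auto
  also have "(\<Sum>i\<in>A. (a i * sqrt (a i))\<^sup>2) = q3"
    unfolding q3_def using assms(1) by (intro sum.cong) (auto simp: power_mult_distrib power3_eq_cube power2_eq_square)
  finally have cs: "q2^2 \<le> q1 * q3" .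
  have "(2*q1^2/3) * (q1^2/3) \<le> (q1^2 - q2) * (q1^2 - 2*q2)"
    using q2le q2n q1p by (intro mult_mono) auto
  also have "... = q1 * (q1^3 - 3*q1*q2) + 2*q2^2" by (simp add: algebra_simps power2_eq_square power3_eq_cube)
  also have "... \<le> q1 * (q1^3 - 3*q1*q2) + 2*(q1*q3)" using cs by simp
  also have "... = q1 * (q1^3 - 3*q1*q2 + 2*q3)" by (simp add: algebra_simps)
  finally have "q1 * (2*q1^3/9) \<le> q1 * (q1^3 - 3*q1*q2 + 2*q3)"
    by (simp add: power2_eq_square power3_eq_cube)
  hence "2*q1^3/9 \<le> q1^3 - 3*q1*q2 + 2*q3" using q1p by (simp add: mult_le_cancel_left_pos)
  thus ?thesis unfolding q1_def[symmetric] q2_def[symmetric] q3_def[symmetric] by simp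
qed

lemma six_pow: fixes u :: real assumes "0 \<le> u" shows "(1+u)^6 \<le> 32 * (1 + u^6)"
proof -
  have a: "(1+u)^2 \<le> 2*(1+u^2)" proof -
    have "0 \<le> (1-u)^2" by simp
    thus ?thesis by (simp add: power2_eq_square algebra_simps)
  qed
  have b: "(1+v)^3 \<le> 4*(1+v^3)" if "0 \<le> v" for v :: real
  proof -
    have "0 \<le> 3*(1-v)^2*(1+v)" using that by simp
    thus ?thesis by (simp add: power2_eq_square power3_eq_cube algebra_simps)
  qed
  have "(1+u)^6 = ((1+u)^2)^3" by (simp flip: power_mult)
  also have "... \<le> (2*(1+u^2))^3" using a by (intro power_mono) auto
  also have "... = 8 * (1+u^2)^3" by (simp only: power_mult_distrib) simp
  also have "... \<le> 8 * (4*(1+(u^2)^3))" using b[of "u^2"] by simp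
  also have "... = 32*(1+u^6)" by (simp flip: power_mult)
  finally show ?thesis .
qed

lemma int_bound:
  fixes b :: real assumes b: "0 < b"
  shows "(\<integral>\<^sup>+ t. ennreal ((1 + b*t) powr (-3/2)) * indicator {0..} t \<partial>lborel) = ennreal (2/b)"
proof -
  have "(\<integral>\<^sup>+ t. ennreal ((1 + b*t) powr (-3/2)) * indicator {0..} t \<partial>lborel)
      = ennreal (0 - (- (2/b) * (1 + b*0) powr (-1/2)))"
  proof (rule nn_integral_FTC_atLeast)
    show "(\<lambda>t. (1 + b*t) powr (-3/2)) \<in> borel_measurable borel" by measurable
    show "DERIV (\<lambda>t. - (2/b) * (1 + b*t) powr (-1/2)) x :> (1 + b*x) powr (-3/2)" if "0 \<le> x" for x
    proof -
      have pos: "0 < 1 + b*x" using b that by (simp add: add_pos_nonneg)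
      have d1: "DERIV (\<lambda>t. 1 + b*t) x :> b"
        by (auto intro!: derivative_eq_intros)
      have d2: "DERIV (\<lambda>t. (1 + b*t) powr (-1/2)) x :> (-1/2) * (1 + b*x) powr (-1/2 - of_nat 1) * b"
        by (rule DERIV_fun_powr[OF d1]) (use pos in simp)
      have d3: "DERIV (\<lambda>t. - (2/b) * (1 + b*t) powr (-1/2)) x :> - (2/b) * ((-1/2) * (1 + b*x) powr (-1/2 - of_nat 1) * b)"
        by (rule DERIV_cmult[OF d2])
      have e: "- (2/b) * ((-1/2) * (1 + b*x) powr (-1/2 - of_nat 1) * b) = (1 + b*x) powr (-3/2)"
        using b by (simp add: field_simps)
      show ?thesis using d3 unfolding e .
    qed
    show "0 \<le> (1 + b*x) powr (-3/2)" for x by simp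
    show "((\<lambda>t. - (2/b) * (1 + b*t) powr (-1/2)) \<longlongrightarrow> 0) at_top" 
    proof -
      have "filterlim (\<lambda>t. 1 + b*t) at_top at_top"
        using b by (intro filterlim_tendsto_add_at_top[OF tendsto_const] filterlim_tendsto_pos_mult_at_top[OF tendsto_const] filterlim_ident) auto
      hence "((\<lambda>t. (1 + b*t) powr (-1/2)) \<longlongrightarrow> 0) at_top" by (intro tendsto_neg_powr) auto
      hence "((\<lambda>t. - (2/b) * (1 + b*t) powr (-1/2)) \<longlongrightarrow> - (2/b) * 0) at_top" by (intro tendsto_mult tendsto_const)
      thus ?thesis by simp
    qed
  qed
  also have "... = ennreal (2/b)" by simp
  finally show ?thesis .
qed

theorem lemmaA2:
  shows "\<exists>C::real. \<forall>(p::nat) (lam::nat \<Rightarrow> real).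
    (\<forall>j\<in>{1..p}. 0 \<le> lam j) \<and>
    (\<forall>i j. 1 \<le> i \<and> i \<le> j \<and> j \<le> p \<longrightarrow> lam j \<le> lam i) \<and>
    3 * (lam 1)^2 \<le> (\<Sum>j=1..p. (lam j)^2) \<and>
    0 < (\<Sum>j=1..p. (lam j)^2)
    \<longrightarrow> (\<integral>\<^sup>+ t\<in>{0..}. ennreal (\<Prod>j=1..p. (1 + (lam j)^2 * t^2) powr (-1/4)) \<partial>lborel)
        \<le> ennreal (C / sqrt (\<Sum>j=1..p. (lam j)^2))"
proof (intro exI[of _ "6 * sqrt 3"] allI impI)
  fix p :: nat and lam :: "nat \<Rightarrow> real"
  assume H: "(\<forall>j\<in>{1..p}. 0 \<le> lam j) \<and>
    (\<forall>i j. 1 \<le> i \<and> i \<le> j \<and> j \<le> p \<longrightarrow> lam j \<le> lam i) \<and>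
    3 * (lam 1)^2 \<le> (\<Sum>j=1..p. (lam j)^2) \<and>
    0 < (\<Sum>j=1..p. (lam j)^2)"
  define s where "s = (\<Sum>j=1..p. (lam j)^2)"
  define a where "a = (\<lambda>j. (lam j)^2)"
  have spos: "0 < s" using H s_def by simp
  have s_a: "s = (\<Sum>j\<in>{1..p}. a j)" unfolding s_def a_def by simp
  have anon: "\<forall>j\<in>{1..p}. 0 \<le> a j" unfolding a_def by simp
  have ale: "\<forall>j\<in>{1..p}. a j \<le> (lam 1)^2"
  proof
    fix j assume j: "j \<in> {1..p}"
    hence "lam j \<le> lam 1" "0 \<le> lam j" using H by auto
    thus "a j \<le> (lam 1)^2" unfolding a_def by (intro power_mono) auto
  qed
  have m3: "3 * (lam 1)^2 \<le> (\<Sum>j\<in>{1..p}. a j)" using H s_a s_def by simp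
  define E1 where "E1 = (\<Sum>i\<in>{1..p}. a i)"
  define E2 where "E2 = ((\<Sum>i\<in>{1..p}. a i)^2 - (\<Sum>i\<in>{1..p}. a i^2))/2"
  define E3 where "E3 = ((\<Sum>i\<in>{1..p}. a i)^3 - 3*(\<Sum>i\<in>{1..p}. a i)*(\<Sum>i\<in>{1..p}. a i^2) + 2*(\<Sum>i\<in>{1..p}. a i^3))/6"
  have E3low: "s^3/27 \<le> E3"
    unfolding E3_def s_a by (rule e3_lower[OF anon ale m3]) (use spos s_a in simp)
  define b where "b = sqrt s / sqrt 3"
  have bpos: "0 < b" using spos b_def by simp
  have key: "(\<Prod>j=1..p. (1 + (lam j)^2 * t^2) powr (-1/4)) \<le> 3 * (1 + b*t) powr (-3/2)" if t: "0 \<le> t" for t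
  proof -
    define x where "x = t^2"
    have x0: "0 \<le> x" unfolding x_def by simp
    from esym_bound[OF _ anon x0]
    have eb: "0 \<le> E1" "0 \<le> E2" "0 \<le> E3" "1 + E1*x + E2*x^2 + E3*x^3 \<le> (\<Prod>i\<in>{1..p}. 1 + a i * x)"
      unfolding E1_def E2_def E3_def by auto
    define u where "u = b * t"
    have u0: "0 \<le> u" using bpos t u_def by simp
    have "u^6 = (sqrt s)^6 / (sqrt 3)^6 * t^6" unfolding u_def b_def by (simp add: power_mult_distrib power_divide)
    also have "(sqrt s)^6 = s^3"
    proof -
      have "(sqrt s)^6 = ((sqrt s)^2)^3" by (simp flip: power_mult)
      thus ?thesis using spos by simp
    qed
    also have "(sqrt 3)^6 = (27::real)"
    proof -
      have "(sqrt 3)^6 = ((sqrt 3)^2)^3" by (simp only: power_mult[symmetric]) simp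
      also have "... = (27::real)" by simp
      finally show ?thesis .
    qed
    finally have u6: "u^6 = s^3/27 * x^3" unfolding x_def by (simp flip: power_mult)
    have "s^3/27 * x^3 \<le> E3 * x^3" using E3low x0 by (intro mult_right_mono) auto
    moreover have "0 \<le> E1*x + E2*x^2" using eb x0 by simp
    ultimately have P1: "1 + u^6 \<le> (\<Prod>i\<in>{1..p}. 1 + a i * x)" using eb(4) u6 by linarith
    have P2: "(1+u)^6 / 32 \<le> 1 + u^6" using six_pow[OF u0] by simp
    have pos: "0 < (1+u)^6 / 32" using u0 by simp
    have "(\<Prod>j=1..p. (1 + (lam j)^2 * t^2) powr (-1/4)) = (\<Prod>i\<in>{1..p}. 1 + a i * x) powr (-1/4)"
      unfolding prod_powr_distrib a_def x_def by simp
    also have "... \<le> ((1+u)^6 / 32) powr (-1/4)"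
      using P1 P2 pos by (intro powr_mono2') auto
    also have "... = (1+u) powr (-3/2) * 32 powr (1/4)"
    proof -
      have "((1+u)^6) = (1+u) powr (real 6)" using u0 by (simp add: powr_realpow)
      hence "((1+u)^6) powr (-1/4) = (1+u) powr (-3/2)" by (simp add: powr_powr)
      moreover have "(32::real) powr (-1/4) = 1 / 32 powr (1/4)" by (simp add: powr_minus_divide)
      ultimately show ?thesis by (simp add: powr_divide)
    qed
    also have "... \<le> (1+u) powr (-3/2) * 3"
    proof (intro mult_left_mono)
      have "(32::real) powr (1/4) \<le> 81 powr (1/4)" by (intro powr_mono2) auto
      also have "(81::real) powr (1/4) = (3 powr 4) powr (1/4)" by simp
      also have "... = 3" by (simp add: powr_powr)
      finally show "(32::real) powr (1/4) \<le> 3" .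
    qed simp
    finally show ?thesis unfolding u_def by simp
  qed
  have "(\<integral>\<^sup>+ t\<in>{0..}. ennreal (\<Prod>j=1..p. (1 + (lam j)^2 * t^2) powr (-1/4)) \<partial>lborel)
      \<le> (\<integral>\<^sup>+ t. ennreal 3 * (ennreal ((1 + b*t) powr (-3/2)) * indicator {0..} t) \<partial>lborel)"
  proof (intro nn_integral_mono)
    fix t :: real
    show "ennreal (\<Prod>j=1..p. (1 + (lam j)^2 * t^2) powr (-1/4)) * indicator {0..} t
      \<le> ennreal 3 * (ennreal ((1 + b*t) powr (-3/2)) * indicator {0..} t)"
    proof (cases "0 \<le> t")
      case True
      have "ennreal (\<Prod>j=1..p. (1 + (lam j)^2 * t^2) powr (-1/4)) \<le> ennreal (3 * (1 + b*t) powr (-3/2))"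
        by (rule ennreal_leI[OF key[OF True]])
      also have "... = ennreal 3 * ennreal ((1 + b*t) powr (-3/2))" by (rule ennreal_mult) auto
      finally show ?thesis using True by simp
    qed simp
  qed
  also have "... = ennreal 3 * (\<integral>\<^sup>+ t. ennreal ((1 + b*t) powr (-3/2)) * indicator {0..} t \<partial>lborel)"
    by (rule nn_integral_cmult) measurable
  also have "... = ennreal 3 * ennreal (2/b)" using int_bound[OF bpos] by simp
  also have "... = ennreal (6 * sqrt 3 / sqrt (\<Sum>j=1..p. (lam j)^2))"
  proof -
    have "ennreal 3 * ennreal (2/b) = ennreal (3 * (2/b))" using bpos by (intro ennreal_mult[symmetric]) auto
    also have "3 * (2/b) = 6 * sqrt 3 / sqrt (\<Sum>j=1..p. (lam j)^2)"
      unfolding b_def s_def[symmetric] by simp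
    finally show ?thesis .
  qed
  finally show "(\<integral>\<^sup>+ t\<in>{0..}. ennreal (\<Prod>j=1..p. (1 + (lam j)^2 * t^2) powr (-1/4)) \<partial>lborel)
        \<le> ennreal (6 * sqrt 3 / sqrt (\<Sum>j=1..p. (lam j)^2))" .
qed

end
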